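(* Assume the standing conventions of the context and suppose $\mathcal D_{Z,Z'}\neq\emptyset$. Let $\Psi'$ be a consecutive pair in $Z'_{\mathrm I}$ such that $(Z,\Lambda_{\Psi'})\in\mathcal D_{Z,Z'}$, and let $N\subset Z'_{\mathrm I}$ with $|N\cap\Psi'|=1$. Then there is no $\Lambda\in\overline{\mathcal S}_Z$ with $(\Lambda,\Lambda_N)\in\overline{\mathcal B}^+_{Z,Z'}$.
   Context: A symbol is an array $\Lambda=\binom{a'_1,\ldots,a'_{m_1}}{b'_1,\ldots,b'_{m_2}}$ of two strictly decreasing finite sequences of nonnegative integers (top row, bottom row); its defect is $\mathrm{def}(\Lambda)=m_1-m_2$. Standing assumptions: $Z=\binom{a_1,\ldots,a_{m+1}}{b_1,\ldots,b_m}$ is a special symbol of defect $1$, i.e. $a_1\ge b_1\ge a_2\ge b_2\ge\cdots\ge b_m\ge a_{m+1}$; $Z'=\binom{c_1,\ldots,c_{m'}}{d_1,\ldots,d_{m'}}$ is a special symbol of defect $0$, i.e. $c_1\ge d_1\ge c_2\ge d_2\ge\cdots\ge c_{m'}\ge d_{m'}$; and $m'\in\{m,m+1\}$. For a symbol $Y$, $Y_{\mathrm I}$ is the set of entries of $Y$ occurring in exactly one row. For $M\subset Z_{\mathrm I}$, $\Lambda_M$ is the symbol obtained from $Z$ by moving every entry of $M$ to the other row (rows re-sorted decreasingly); for $N\subset Z'_{\mathrm I}$, $\Lambda_N$ is obtained from $Z'$ in the same way. $\overline{\mathcal S}_Z=\{\Lambda_M: M\subset Z_{\mathrm I}\}$,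 $\overline{\mathcal S}_{Z'}=\{\Lambda_N:N\subset Z'_{\mathrm I}\}$; $\mathcal S_{Z,1}$ (resp. $\mathcal S_{Z',0}$) is the set of elements of $\overline{\mathcal S}_Z$ of defect $1$ (resp. of $\overline{\mathcal S}_{Z'}$ of defect $0$). A consecutive pair in $Z'_{\mathrm I}$ is a two-element subset $\{c_k,d_l\}\subset Z'_{\mathrm I}$, written $\binom{c_k}{d_l}$, with $l\in\{k-1,k\}$; a consecutive pair in $Z_{\mathrm I}$ is $\{a_k,b_l\}\subset Z_{\mathrm I}$, written $\binom{a_k}{b_l}$, with $l\in\{k-1,k\}$. Relation $\overline{\mathcal B}^+_{Z,Z'}\subset\overline{\mathcal S}_Z\times\overline{\mathcal S}_{Z'}$: for $\Lambda=\binom{a'_1,\ldots,a'_{m_1}}{b'_1,\ldots,b'_{m_2}}\in\overline{\mathcal S}_Z$ and $\Lambda'=\binom{c'_1,\ldots,c'_{m'_1}}{d'_1,\ldots,d'_{m'_2}}\in\overline{\mathcal S}_{Z'}$, $(\Lambda,\Lambda')\in\overline{\mathcal B}^+_{Z,Z'}$ iff $\mathrm{def}(\Lambda')=1-\mathrm{def}(\Lambda)$ and: if $m'=m$, $a'_i>d'_i\ge a'_{i+1}$ for $1\le i\le m'_2$ and $b'_{i-1}>c'_i\ge b'_i$ for $1\le i\le m'_1$; if $m'=m+1$, $a'_i\ge d'_i>a'_{i+1}$ for $1\le i\le m'_2$ and $b'_{i-1}\ge c'_i>b'_i$ for $1\le i\le m'_1$; here $b'_0=+\infty$ and nonexistent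 entries $a'_j,b'_j$ beyond the row lengths are $-\infty$. Then $\mathcal D_{Z,Z'}=\overline{\mathcal B}^+_{Z,Z'}\cap(\mathcal S_{Z,1}\times\mathcal S_{Z',0})$. *)

theory Defs
  imports Complex_Main "HOL-Library.Extended_Real"
begin

text \<open>A symbol is represented by the pair (set of entries of the top row,
  set of entries of the bottom row); each row is a strictly decreasing
  finite sequence, hence determined by its set of entries.\<close>

type_synonym symbol = "nat set \<times> nat set"

text \<open>The i-th entry (1-based) of a row, in decreasing order;
  index 0 gives +infinity (used only for b'_0), indices beyond the row
  length give -infinity.\<close>
definition ent :: "nat set \<Rightarrow> nat \<Rightarrow> ereal" where
  "ent A i = (if i = 0 then PInfty
              else if i \<le> card A then ereal (real (rev (sorted_list_of_set A) ! (i - 1)))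
              else MInfty)"

definition defect :: "symbol \<Rightarrow> int" where
  "defect L = int (card (fst L)) - int (card (snd L))"

definition symI :: "symbol \<Rightarrow> nat set" where
  "symI L = (fst L - snd L) \<union> (snd L - fst L)"

definition move :: "symbol \<Rightarrow> nat set \<Rightarrow> symbol" where
  "move L M = ((fst L - M) \<union> (snd L \<inter> M), (snd L - M) \<union> (fst L \<inter> M))"

definition Sbar :: "symbol \<Rightarrow> symbol set" where
  "Sbar L = {move L M | M. M \<subseteq> symI L}"

definition Sdef :: "symbol \<Rightarrow> int \<Rightarrow> symbol set" where
  "Sdef L k = {L' \<in> Sbar L. defect L' = k}"

definition mk_symbol :: "nat list \<Rightarrow> nat list \<Rightarrow> symbol" where
  "mk_symbol tp bt = (set tp, set bt)"

text \<open>Consecutive pair in Z'_I for Z' with rows c, d (0-based list indices: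
  c!k is c_{k+1}, d!l is d_{l+1}; condition l in {k-1,k}).\<close>
definition consec_pair0 :: "nat list \<Rightarrow> nat list \<Rightarrow> nat set \<Rightarrow> bool" where
  "consec_pair0 c d P \<longleftrightarrow>
     (\<exists>k < length c. \<exists>l < length d. (l + 1 = k \<or> l = k) \<and>
        P = {c ! k, d ! l} \<and> P \<subseteq> symI (mk_symbol c d))"

definition Bplus_rel :: "nat \<Rightarrow> nat \<Rightarrow> symbol \<Rightarrow> symbol \<Rightarrow> bool" where
  "Bplus_rel m m' L L' \<longleftrightarrow>
     defect L' = 1 - defect L \<and>
     (m' = m \<longrightarrow>
        (\<forall>i \<in> {1..card (snd L')}.
            ent (fst L) i > ent (snd L') i \<and> ent (snd L') i \<ge> ent (fst L) (i + 1)) \<and>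
        (\<forall>i \<in> {1..card (fst L')}.
            ent (snd L) (i - 1) > ent (fst L') i \<and> ent (fst L') i \<ge> ent (snd L) i)) \<and>
     (m' = m + 1 \<longrightarrow>
        (\<forall>i \<in> {1..card (snd L')}.
            ent (fst L) i \<ge> ent (snd L') i \<and> ent (snd L') i > ent (fst L) (i + 1)) \<and>
        (\<forall>i \<in> {1..card (fst L')}.
            ent (snd L) (i - 1) \<ge> ent (fst L') i \<and> ent (fst L') i > ent (snd L) i))"

definition Bbar_plus :: "nat \<Rightarrow> nat \<Rightarrow> symbol \<Rightarrow> symbol \<Rightarrow> (symbol \<times> symbol) set" where
  "Bbar_plus m m' Z Z' = {(L, L'). L \<in> Sbar Z \<and> L' \<in> Sbar Z' \<and> Bplus_rel m m' L L'}"

definition Dset :: "nat \<Rightarrow> nat \<Rightarrow> symbol \<Rightarrow> symbol \<Rightarrow> (symbol \<times> symbol) set" where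
  "Dset m m' Z Z' = Bbar_plus m m' Z Z' \<inter> (Sdef Z 1 \<times> Sdef Z' 0)"

end

theory Submission
  imports Defs
begin



definition G :: "nat set \<Rightarrow> nat \<Rightarrow> nat" where
  "G S t = card {s\<in>S. t \<le> s}"

lemma dec_nth_le: "sorted_wrt (>) xs \<Longrightarrow> k \<le> j \<Longrightarrow> j < length xs \<Longrightarrow> xs!j \<le> (xs!k::nat)"
  by (metis le_less order.strict_implies_order sorted_wrt_nth_less)

lemma nthG:
  fixes xs :: "nat list"
  assumes s: "sorted_wrt (>) xs" and j: "j < length xs"
  shows "(t \<le> xs!j) \<longleftrightarrow> (Suc j \<le> G (set xs) t)"
proof -
  have d: "distinct xs" using s
    by (metis sorted_wrt_rev strict_sorted_iff distinct_rev)
  have fin: "finite {s\<in>set xs. t \<le> s}" by simp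
  show ?thesis
  proof
    assume h: "t \<le> xs!j"
    have sub: "(nth xs) ` {..j} \<subseteq> {s\<in>set xs. t \<le> s}"
    proof
      fix s assume "s \<in> (nth xs) ` {..j}"
      then obtain k where k: "k \<le> j" "s = xs!k" by auto
      have "xs!j \<le> xs!k" using dec_nth_le[OF s k(1) j] .
      then show "s \<in> {s\<in>set xs. t \<le> s}" using k h j by auto
    qed
    have "card ((nth xs) ` {..j}) = Suc j"
      apply (subst card_image) using d j by (auto simp: inj_on_def nth_eq_iff_index_eq)
    with card_mono[OF fin sub] show "Suc j \<le> G (set xs) t" unfolding G_def by simp
  next
    assume h: "Suc j \<le> G (set xs) t"
    show "t \<le> xs!j"
    proof (rule ccontr)
      assume nt: "\<not> t \<le> xs!j"
      have sub: "{s\<in>set xs. t \<le> s} \<subseteq> (nth xs) ` {..<j}"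
      proof
        fix s assume "s \<in> {s\<in>set xs. t \<le> s}"
        then obtain k where k: "k < length xs" "s = xs!k" "t \<le> s" by (auto simp: in_set_conv_nth)
        have "k < j"
        proof (rule ccontr)
          assume "\<not> k < j"
          then have "xs!k \<le> xs!j" using dec_nth_le[OF s _ k(1)] by simp
          with k nt show False by simp
        qed
        then show "s \<in> (nth xs) ` {..<j}" using k by auto
      qed
      have "card ((nth xs) ` {..<j}) \<le> j" using card_image_le[of "{..<j}" "nth xs"] by simp
      with card_mono[OF _ sub] have "G (set xs) t \<le> j" unfolding G_def by simp
      with h show False by simp
    qed
  qed
qed

lemma rev_sls:
  assumes "finite S"
  shows "sorted_wrt (>) (rev (sorted_list_of_set S))" "set (rev (sorted_list_of_set S)) = S"
    "length (rev (sorted_list_of_set S)) = card S"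
  using assms by (auto simp: sorted_wrt_rev)

lemma G_le_card: "finite S \<Longrightarrow> G S t \<le> card S"
  unfolding G_def by (intro card_mono) auto

lemma ent_ge:
  assumes "finite S"
  shows "(ent S i \<ge> ereal (real t)) \<longleftrightarrow> (i \<le> G S t)"
proof -
  consider "i = 0" | "i > card S" | "1 \<le> i \<and> i \<le> card S" by linarith
  then show ?thesis
  proof cases
    case 1 then show ?thesis by (simp add: ent_def)
  next
    case 2 then show ?thesis using G_le_card[OF assms, of t] by (simp add: ent_def)
  next
    case 3
    let ?xs = "rev (sorted_list_of_set S)"
    have "(t \<le> ?xs!(i-1)) \<longleftrightarrow> (Suc (i-1) \<le> G (set ?xs) t)"
      using 3 rev_sls[OF assms] by (intro nthG) auto
    then show ?thesis using 3 rev_sls[OF assms] by (simp add: ent_def)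
  qed
qed

lemma ent_gt:
  assumes "finite S"
  shows "(ent S i > ereal (real t)) \<longleftrightarrow> (i \<le> G S (Suc t))"
proof -
  consider "i = 0" | "i > card S" | "1 \<le> i \<and> i \<le> card S" by linarith
  then show ?thesis
  proof cases
    case 1 then show ?thesis by (simp add: ent_def)
  next
    case 2 then show ?thesis using G_le_card[OF assms, of "Suc t"] by (simp add: ent_def)
  next
    case 3
    let ?xs = "rev (sorted_list_of_set S)"
    have "(Suc t \<le> ?xs!(i-1)) \<longleftrightarrow> (Suc (i-1) \<le> G (set ?xs) (Suc t))"
      using 3 rev_sls[OF assms] by (intro nthG) auto
    then show ?thesis using 3 rev_sls[OF assms] by (simp add: ent_def Suc_le_eq)
  qed
qed




lemma G_mono: "finite S \<Longrightarrow> t \<le> t' \<Longrightarrow> G S t' \<le> G S t"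
  unfolding G_def by (intro card_mono) auto

lemma G_mem: "finite S \<Longrightarrow> s \<in> S \<Longrightarrow> G S s = Suc (G S (Suc s))"
proof -
  assume f: "finite S" and s: "s \<in> S"
  have "{x\<in>S. s \<le> x} = insert s {x\<in>S. Suc s \<le> x}" using s by auto
  then show ?thesis unfolding G_def using f by simp
qed

lemma G_nmem: "s \<notin> S \<Longrightarrow> G S s = G S (Suc s)"
proof -
  assume s: "s \<notin> S"
  have "{x\<in>S. s \<le> x} = {x\<in>S. Suc s \<le> x}" using s by (auto simp: le_less Suc_le_eq)
  then show ?thesis unfolding G_def by simp
qed

lemma G_gap: "finite S \<Longrightarrow> G S hi < G S lo \<Longrightarrow> \<exists>s\<in>S. lo \<le> s \<and> s < hi"
proof (rule ccontr)
  assume f: "finite S" and h: "G S hi < G S lo" and n: "\<not> (\<exists>s\<in>S. lo \<le> s \<and> s < hi)"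
  have "{x\<in>S. lo \<le> x} \<subseteq> {x\<in>S. hi \<le> x}" using n by auto
  then have "G S lo \<le> G S hi" unfolding G_def using f by (intro card_mono) auto
  with h show False by simp
qed

lemma G_between: "y < x \<Longrightarrow> (\<forall>s\<in>S. \<not> (y < s \<and> s < x)) \<Longrightarrow> G S (Suc y) = G S x"
proof -
  assume n: "\<forall>s\<in>S. \<not> (y < s \<and> s < x)" and yx: "y < x"
  have "{s\<in>S. Suc y \<le> s} = {s\<in>S. x \<le> s}" using n yx by (auto simp: Suc_le_eq) 
  then show ?thesis unfolding G_def by simp
qed

lemma G_swap:
  assumes f: "finite C" and x: "x \<in> C" and y: "y \<notin> C"
  shows "G (insert y (C - {x})) t + (if t \<le> x then 1 else 0) = G C t + (if t \<le> y then 1 else 0)"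
proof -
  have fs: "finite {s\<in>C - {x}. t \<le> s}" using f by simp
  have e1: "{s\<in>insert y (C - {x}). t \<le> s} = (if t \<le> y then insert y {s\<in>C - {x}. t \<le> s} else {s\<in>C - {x}. t \<le> s})"
    by auto
  have e2: "{s\<in>C. t \<le> s} = (if t \<le> x then insert x {s\<in>C - {x}. t \<le> s} else {s\<in>C - {x}. t \<le> s})"
    using x by auto
  show ?thesis unfolding G_def e1 e2 using fs y by (auto simp: card_insert_if)
qed

lemma G_list: "distinct p \<Longrightarrow> G (set p) t = card {i. i < length p \<and> t \<le> p!i}"
proof -
  assume d: "distinct p"
  have "{s\<in>set p. t \<le> s} = (nth p) ` {i. i < length p \<and> t \<le> p!i}"
    by (auto simp: in_set_conv_nth)
  moreover have "inj_on (nth p) {i. i < length p \<and> t \<le> p!i}"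
    using d by (auto simp: inj_on_def nth_eq_iff_index_eq)
  ultimately show ?thesis unfolding G_def by (simp add: card_image)
qed

lemma special_G:
  fixes p q :: "nat list"
  assumes dp: "distinct p" and dq: "distinct q"
    and l1: "length q \<le> length p" and l2: "length p \<le> Suc (length q)"
    and h1: "\<forall>i < length q. q!i \<le> p!i"
    and h2: "\<forall>i. Suc i < length p \<longrightarrow> p!(Suc i) \<le> q!i"
  shows "G (set q) t \<le> G (set p) t" "G (set p) t \<le> Suc (G (set q) t)"
proof -
  have "{i. i < length q \<and> t \<le> q!i} \<subseteq> {i. i < length p \<and> t \<le> p!i}"
    using h1 l1 by (auto intro: order_trans)
  then show "G (set q) t \<le> G (set p) t" unfolding G_list[OF dp] G_list[OF dq]
    by (intro card_mono) auto
next
  have sub: "{i. i < length p \<and> t \<le> p!i} \<subseteq> insert 0 (Suc ` {i. i < length q \<and> t \<le> q!i})"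
  proof
    fix i assume i: "i \<in> {i. i < length p \<and> t \<le> p!i}"
    show "i \<in> insert 0 (Suc ` {i. i < length q \<and> t \<le> q!i})"
    proof (cases i)
      case (Suc j)
      then have "p!(Suc j) \<le> q!j" "j < length q" using h2 i l2 by auto
      then show ?thesis using Suc i by (auto intro: order_trans)
    qed simp
  qed
  have "card {i. i < length p \<and> t \<le> p!i} \<le> card (insert 0 (Suc ` {i. i < length q \<and> t \<le> q!i}))"
    by (rule card_mono[OF _ sub]) auto
  also have "\<dots> \<le> Suc (card (Suc ` {i. i < length q \<and> t \<le> q!i}))" by (rule card_insert_le_m1) auto
  also have "\<dots> \<le> Suc (card {i. i < length q \<and> t \<le> q!i})" using card_image_le[of _ Suc] by simp
  finally show "G (set p) t \<le> Suc (G (set q) t)" unfolding G_list[OF dp] G_list[OF dq] .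
qed




lemma P1:
  assumes fA: "finite A" and fD: "finite D" and h: "\<forall>i\<in>{1..card D}. ent A i > ent D i"
  shows "G D t \<le> G A (Suc t)"
proof (cases "G D t = 0")
  case False
  let ?k = "G D t"
  have k: "?k \<in> {1..card D}" using False G_le_card[OF fD] by auto
  have "ereal (real t) \<le> ent D ?k" using ent_ge[OF fD] by simp
  also have "\<dots> < ent A ?k" using h k by auto
  finally show ?thesis using ent_gt[OF fA] by simp
qed simp

lemma P2:
  assumes fA: "finite A" and fD: "finite D" and h: "\<forall>i\<in>{1..card D}. ent D i \<ge> ent A (i+1)"
    and c: "card A \<le> card D + 1"
  shows "G A t \<le> G D t + 1"
proof (rule ccontr)
  assume n: "\<not> G A t \<le> G D t + 1"
  let ?i = "G D t + 1"
  have i: "?i \<in> {1..card D}" using n G_le_card[OF fA, of t] c by auto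
  have "ereal (real t) \<le> ent A (?i + 1)" using ent_ge[OF fA] n by simp
  also have "\<dots> \<le> ent D ?i" using h i by auto
  finally have "?i \<le> G D t" using ent_ge[OF fD] by simp
  then show False by simp
qed

lemma P4:
  assumes fB: "finite B" and fC: "finite C" and h: "\<forall>i\<in>{1..card C}. ent B (i - 1) > ent C i"
  shows "G C t \<le> G B (Suc t) + 1"
proof (cases "G C t = 0")
  case False
  let ?k = "G C t"
  have k: "?k \<in> {1..card C}" using False G_le_card[OF fC] by auto
  have "ereal (real t) \<le> ent C ?k" using ent_ge[OF fC] by simp
  also have "\<dots> < ent B (?k - 1)" using h k by auto
  finally have "?k - 1 \<le> G B (Suc t)" using ent_gt[OF fB] by simp
  then show ?thesis by simp
qed simp

lemma P5:
  assumes fB: "finite B" and fC: "finite C" and h: "\<forall>i\<in>{1..card C}. ent C i \<ge> ent B i"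
    and c: "card B \<le> card C"
  shows "G B t \<le> G C t"
proof (cases "G B t = 0")
  case False
  let ?k = "G B t"
  have k: "?k \<in> {1..card C}" using False G_le_card[OF fB, of t] c by auto
  have "ereal (real t) \<le> ent B ?k" using ent_ge[OF fB] by simp
  also have "\<dots> \<le> ent C ?k" using h k by auto
  finally show ?thesis using ent_ge[OF fC] by simp
qed simp

lemma Q1:
  assumes fA: "finite A" and fD: "finite D" and h: "\<forall>i\<in>{1..card D}. ent A i \<ge> ent D i"
  shows "G D t \<le> G A t"
proof (cases "G D t = 0")
  case False
  let ?k = "G D t"
  have k: "?k \<in> {1..card D}" using False G_le_card[OF fD] by auto
  have "ereal (real t) \<le> ent D ?k" using ent_ge[OF fD] by simp
  also have "\<dots> \<le> ent A ?k" using h k by auto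
  finally show ?thesis using ent_ge[OF fA] by simp
qed simp

lemma Q2:
  assumes fA: "finite A" and fD: "finite D" and h: "\<forall>i\<in>{1..card D}. ent D i > ent A (i+1)"
    and c: "card A \<le> card D + 1"
  shows "G A t \<le> G D (Suc t) + 1"
proof (cases "G A t \<le> 1")
  case False
  let ?k = "G A t"
  have k: "?k - 1 \<in> {1..card D}" using False G_le_card[OF fA, of t] c by auto
  have "ereal (real t) \<le> ent A (?k - 1 + 1)" using ent_ge[OF fA] False by simp
  also have "\<dots> < ent D (?k - 1)" using h k by blast
  finally have "?k - 1 \<le> G D (Suc t)" using ent_gt[OF fD] by simp
  then show ?thesis by simp
qed auto

lemma Q3:
  assumes fB: "finite B" and fC: "finite C" and h: "\<forall>i\<in>{1..card C}. ent B (i - 1) \<ge> ent C i"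
  shows "G C t \<le> G B t + 1"
proof (cases "G C t = 0")
  case False
  let ?k = "G C t"
  have k: "?k \<in> {1..card C}" using False G_le_card[OF fC] by auto
  have "ereal (real t) \<le> ent C ?k" using ent_ge[OF fC] by simp
  also have "\<dots> \<le> ent B (?k - 1)" using h k by auto
  finally have "?k - 1 \<le> G B t" using ent_ge[OF fB] by simp
  then show ?thesis by simp
qed simp

lemma Q4:
  assumes fB: "finite B" and fC: "finite C" and h: "\<forall>i\<in>{1..card C}. ent C i > ent B i"
    and c: "card B \<le> card C"
  shows "G B t \<le> G C (Suc t)"
proof (cases "G B t = 0")
  case False
  let ?k = "G B t"
  have k: "?k \<in> {1..card C}" using False G_le_card[OF fB, of t] c by auto
  have "ereal (real t) \<le> ent B ?k" using ent_ge[OF fB] by simp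
  also have "\<dots> < ent C ?k" using h k by auto
  finally show ?thesis using ent_gt[OF fC] by simp
qed simp

lemma gapPD:
  assumes fA: "finite A" and fD: "finite D"
    and h: "\<forall>i\<in>{1..card D}. ent A i > ent D i \<and> ent D i \<ge> ent A (i+1)"
    and u: "u \<in> D" and v: "v \<in> D" and vu: "v < u"
  shows "\<exists>a\<in>A. Suc v \<le> a \<and> a < Suc u"
proof -
  let ?i = "G D u"
  have gu: "G D u = Suc (G D (Suc u))" using G_mem[OF fD u] .
  have gv: "G D v = Suc (G D (Suc v))" using G_mem[OF fD v] .
  have "G D (Suc v) \<ge> G D u" using G_mono[OF fD, of "Suc v" u] vu by simp
  then have i1: "?i + 1 \<le> G D v" using gv by simp
  have i: "?i \<in> {1..card D}" "?i + 1 \<in> {1..card D}" using gu i1 G_le_card[OF fD, of v] by auto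
  have "\<not> ent D ?i > ereal (real u)" using ent_gt[OF fD] gu by simp
  moreover have "ent D ?i \<ge> ent A (?i + 1)" using h i by blast
  ultimately have "\<not> ent A (?i+1) > ereal (real u)" by (meson not_le order_trans less_le_not_le)
  then have n1: "\<not> ?i + 1 \<le> G A (Suc u)" using ent_gt[OF fA] by simp
  have "ereal (real v) \<le> ent D (?i+1)" using ent_ge[OF fD] i1 by simp
  also have "\<dots> < ent A (?i+1)" using h i by blast
  finally have "?i + 1 \<le> G A (Suc v)" using ent_gt[OF fA] by simp
  with n1 have "G A (Suc u) < G A (Suc v)" by simp
  then show ?thesis using G_gap[OF fA] by blast
qed

lemma gapPC:
  assumes fB: "finite B" and fC: "finite C"
    and h: "\<forall>i\<in>{1..card C}. ent B (i - 1) > ent C i \<and> ent C i \<ge> ent B i"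
    and u: "u \<in> C" and v: "v \<in> C" and vu: "v < u"
  shows "\<exists>b\<in>B. Suc v \<le> b \<and> b < Suc u"
proof -
  let ?i = "G C u"
  have gu: "G C u = Suc (G C (Suc u))" using G_mem[OF fC u] .
  have gv: "G C v = Suc (G C (Suc v))" using G_mem[OF fC v] .
  have "G C (Suc v) \<ge> G C u" using G_mono[OF fC, of "Suc v" u] vu by simp
  then have i1: "?i + 1 \<le> G C v" using gv by simp
  have i: "?i \<in> {1..card C}" "?i + 1 \<in> {1..card C}" using gu i1 G_le_card[OF fC, of v] by auto
  have "\<not> ent C ?i > ereal (real u)" using ent_gt[OF fC] gu by simp
  moreover have "ent C ?i \<ge> ent B ?i" using h i by blast
  ultimately have "\<not> ent B ?i > ereal (real u)" by (meson not_le order_trans less_le_not_le)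
  then have n1: "\<not> ?i \<le> G B (Suc u)" using ent_gt[OF fB] by simp
  have "ereal (real v) \<le> ent C (?i+1)" using ent_ge[OF fC] i1 by simp
  also have "\<dots> < ent B (?i + 1 - 1)" using h i by blast
  finally have "?i \<le> G B (Suc v)" using ent_gt[OF fB] by simp
  with n1 have "G B (Suc u) < G B (Suc v)" by simp
  then show ?thesis using G_gap[OF fB] by blast
qed

lemma gapQD:
  assumes fA: "finite A" and fD: "finite D"
    and h: "\<forall>i\<in>{1..card D}. ent A i \<ge> ent D i \<and> ent D i > ent A (i+1)"
    and u: "u \<in> D" and v: "v \<in> D" and vu: "v < u"
  shows "\<exists>a\<in>A. v \<le> a \<and> a < u"
proof -
  let ?i = "G D u"
  have gu: "G D u = Suc (G D (Suc u))" using G_mem[OF fD u] .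
  have gv: "G D v = Suc (G D (Suc v))" using G_mem[OF fD v] .
  have "G D (Suc v) \<ge> G D u" using G_mono[OF fD, of "Suc v" u] vu by simp
  then have i1: "?i + 1 \<le> G D v" using gv by simp
  have i: "?i \<in> {1..card D}" "?i + 1 \<in> {1..card D}" using gu i1 G_le_card[OF fD, of v] by auto
  have "\<not> ent D ?i > ereal (real u)" using ent_gt[OF fD] gu by simp
  moreover have "ent D ?i > ent A (?i + 1)" using h i by blast
  ultimately have "\<not> ent A (?i+1) \<ge> ereal (real u)" by (meson not_le order_le_less_trans)
  then have n1: "\<not> ?i + 1 \<le> G A u" using ent_ge[OF fA] by simp
  have "ereal (real v) \<le> ent D (?i+1)" using ent_ge[OF fD] i1 by simp
  also have "\<dots> \<le> ent A (?i+1)" using h i by blast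
  finally have "?i + 1 \<le> G A v" using ent_ge[OF fA] by simp
  with n1 have "G A u < G A v" by simp
  then show ?thesis using G_gap[OF fA] by blast
qed

lemma gapQC:
  assumes fB: "finite B" and fC: "finite C"
    and h: "\<forall>i\<in>{1..card C}. ent B (i - 1) \<ge> ent C i \<and> ent C i > ent B i"
    and u: "u \<in> C" and v: "v \<in> C" and vu: "v < u"
  shows "\<exists>b\<in>B. v \<le> b \<and> b < u"
proof -
  let ?i = "G C u"
  have gu: "G C u = Suc (G C (Suc u))" using G_mem[OF fC u] .
  have gv: "G C v = Suc (G C (Suc v))" using G_mem[OF fC v] .
  have "G C (Suc v) \<ge> G C u" using G_mono[OF fC, of "Suc v" u] vu by simp
  then have i1: "?i + 1 \<le> G C v" using gv by simp
  have i: "?i \<in> {1..card C}" "?i + 1 \<in> {1..card C}" using gu i1 G_le_card[OF fC, of v] by auto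
  have "\<not> ent C ?i > ereal (real u)" using ent_gt[OF fC] gu by simp
  moreover have "ent C ?i > ent B ?i" using h i by blast
  ultimately have "\<not> ent B ?i \<ge> ereal (real u)" by (meson not_le order_le_less_trans)
  then have n1: "\<not> ?i \<le> G B u" using ent_ge[OF fB] by simp
  have "ereal (real v) \<le> ent C (?i+1)" using ent_ge[OF fC] i1 by simp
  also have "\<dots> \<le> ent B (?i + 1 - 1)" using h i by blast
  finally have "?i \<le> G B v" using ent_ge[OF fB] by simp
  with n1 have "G B u < G B v" by simp
  then show ?thesis using G_gap[OF fB] by blast
qed




lemma G_eq_none: "finite S \<Longrightarrow> G S lo = G S hi \<Longrightarrow> lo \<le> hi \<Longrightarrow> s \<in> S \<Longrightarrow> lo \<le> s \<Longrightarrow> s < hi \<Longrightarrow> False"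
proof -
  assume f: "finite S" and e: "G S lo = G S hi" and lh: "lo \<le> hi" and s: "s \<in> S" "lo \<le> s" "s < hi"
  have "{x\<in>S. hi \<le> x} \<subseteq> {x\<in>S. lo \<le> x}" using lh by auto
  moreover have "s \<in> {x\<in>S. lo \<le> x} - {x\<in>S. hi \<le> x}" using s by auto
  ultimately have "{x\<in>S. hi \<le> x} \<subset> {x\<in>S. lo \<le> x}" by blast
  then have "G S hi < G S lo" unfolding G_def using f by (intro psubset_card_mono) auto
  with e show False by simp
qed

lemma winP_C:
  assumes fA: "finite A" and fB: "finite B" and fC: "finite C" and fD: "finite D"
    and x: "x \<in> C" "x \<notin> D" and y: "y \<in> D" "y \<notin> C" and yx: "y < x"
    and btw: "\<forall>s\<in>C \<union> D. \<not> (y < s \<and> s < x)"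
    and spZ': "\<And>t. G D t \<le> G C t \<and> G C t \<le> Suc (G D t)"
    and spZ: "\<And>t. G B t \<le> G A t \<and> G A t \<le> Suc (G B t)"
    and h1: "\<forall>i\<in>{1..card (insert x (D - {y}))}. ent A i > ent (insert x (D - {y})) i \<and> ent (insert x (D - {y})) i \<ge> ent A (i+1)"
    and h2: "\<forall>i\<in>{1..card (insert y (C - {x}))}. ent B (i - 1) > ent (insert y (C - {x})) i \<and> ent (insert y (C - {x})) i \<ge> ent B i"
    and cB: "card B \<le> card (insert y (C - {x}))"
  shows "G A (Suc y) = G A (Suc x) \<and> G B (Suc y) = G B (Suc x)"
proof -
  let ?C = "insert y (C - {x})" and ?D = "insert x (D - {y})"
  have fC': "finite ?C" and fD': "finite ?D" using fC fD by auto
  have p1: "G ?D x \<le> G A (Suc x)" using P1[OF fA fD'] h1 by blast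
  have p5: "G B (Suc y) \<le> G ?C (Suc y)" using P5[OF fB fC'] h2 cB by blast
  have s1: "G ?C (Suc y) + (if Suc y \<le> x then 1 else 0) = G C (Suc y) + (if Suc y \<le> y then 1 else 0)"
    by (rule G_swap[OF fC x(1) y(2)])
  have s2: "G ?D x + (if x \<le> y then 1 else 0) = G D x + (if x \<le> x then 1 else 0)"
    by (rule G_swap[OF fD y(1) x(2)])
  have b1: "G C (Suc y) = G C x" "G D (Suc y) = G D x" using G_between[OF yx] btw by auto
  have m1: "G C x = Suc (G C (Suc x))" using G_mem[OF fC x(1)] .
  have m2: "G D x = G D (Suc x)" using G_nmem[OF x(2)] .
  have mo: "G A (Suc x) \<le> G A (Suc y)" "G B (Suc x) \<le> G B (Suc y)"
    using G_mono[OF fA, of "Suc y" "Suc x"] G_mono[OF fB, of "Suc y" "Suc x"] yx by auto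
  show ?thesis using p1 p5 s1 s2 b1 m1 m2 mo spZ'[of x] spZ'[of "Suc x"] spZ[of "Suc x"] spZ[of "Suc y"] yx
    by simp
qed

lemma winP_D:
  assumes fA: "finite A" and fB: "finite B" and fC: "finite C" and fD: "finite D"
    and x: "x \<in> D" "x \<notin> C" and y: "y \<in> C" "y \<notin> D" and yx: "y < x"
    and btw: "\<forall>s\<in>C \<union> D. \<not> (y < s \<and> s < x)"
    and spZ': "\<And>t. G D t \<le> G C t \<and> G C t \<le> Suc (G D t)"
    and spZ: "\<And>t. G B t \<le> G A t \<and> G A t \<le> Suc (G B t)"
    and h1: "\<forall>i\<in>{1..card (insert y (D - {x}))}. ent A i > ent (insert y (D - {x})) i \<and> ent (insert y (D - {x})) i \<ge> ent A (i+1)"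
    and h2: "\<forall>i\<in>{1..card (insert x (C - {y}))}. ent B (i - 1) > ent (insert x (C - {y})) i \<and> ent (insert x (C - {y})) i \<ge> ent B i"
    and cA: "card A \<le> card (insert y (D - {x})) + 1"
  shows "G A (Suc y) = G A (Suc x) \<and> G B (Suc y) = G B (Suc x)"
proof -
  let ?C = "insert x (C - {y})" and ?D = "insert y (D - {x})"
  have fC': "finite ?C" and fD': "finite ?D" using fC fD by auto
  have p2: "G A (Suc y) \<le> G ?D (Suc y) + 1" using P2[OF fA fD'] h1 cA by blast
  have p4: "G ?C x \<le> G B (Suc x) + 1" using P4[OF fB fC'] h2 by blast
  have s1: "G ?D (Suc y) + (if Suc y \<le> x then 1 else 0) = G D (Suc y) + (if Suc y \<le> y then 1 else 0)"
    by (rule G_swap[OF fD x(1) y(2)])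
  have s2: "G ?C x + (if x \<le> y then 1 else 0) = G C x + (if x \<le> x then 1 else 0)"
    by (rule G_swap[OF fC y(1) x(2)])
  have b1: "G C (Suc y) = G C x" "G D (Suc y) = G D x" using G_between[OF yx] btw by auto
  have m1: "G D x = Suc (G D (Suc x))" using G_mem[OF fD x(1)] .
  have m2: "G C x = G C (Suc x)" using G_nmem[OF x(2)] .
  have mo: "G A (Suc x) \<le> G A (Suc y)" "G B (Suc x) \<le> G B (Suc y)"
    using G_mono[OF fA, of "Suc y" "Suc x"] G_mono[OF fB, of "Suc y" "Suc x"] yx by auto
  show ?thesis using p2 p4 s1 s2 b1 m1 m2 mo spZ'[of x] spZ'[of "Suc x"] spZ[of "Suc x"] spZ[of "Suc y"] yx
    by simp
qed

lemma winQ_C: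
  assumes fA: "finite A" and fB: "finite B" and fC: "finite C" and fD: "finite D"
    and x: "x \<in> C" "x \<notin> D" and y: "y \<in> D" "y \<notin> C" and yx: "y < x"
    and btw: "\<forall>s\<in>C \<union> D. \<not> (y < s \<and> s < x)"
    and spZ': "\<And>t. G D t \<le> G C t \<and> G C t \<le> Suc (G D t)"
    and spZ: "\<And>t. G B t \<le> G A t \<and> G A t \<le> Suc (G B t)"
    and h1: "\<forall>i\<in>{1..card (insert x (D - {y}))}. ent A i \<ge> ent (insert x (D - {y})) i \<and> ent (insert x (D - {y})) i > ent A (i+1)"
    and h2: "\<forall>i\<in>{1..card (insert y (C - {x}))}. ent B (i - 1) \<ge> ent (insert y (C - {x})) i \<and> ent (insert y (C - {x})) i > ent B i"
    and cB: "card B \<le> card (insert y (C - {x}))"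
  shows "G A y = G A x \<and> G B y = G B x"
proof -
  let ?C = "insert y (C - {x})" and ?D = "insert x (D - {y})"
  have fC': "finite ?C" and fD': "finite ?D" using fC fD by auto
  have q1: "G ?D x \<le> G A x" using Q1[OF fA fD'] h1 by blast
  have q4: "G B y \<le> G ?C (Suc y)" using Q4[OF fB fC'] h2 cB by blast
  have s1: "G ?C (Suc y) + (if Suc y \<le> x then 1 else 0) = G C (Suc y) + (if Suc y \<le> y then 1 else 0)"
    by (rule G_swap[OF fC x(1) y(2)])
  have s2: "G ?D x + (if x \<le> y then 1 else 0) = G D x + (if x \<le> x then 1 else 0)"
    by (rule G_swap[OF fD y(1) x(2)])
  have b1: "G C (Suc y) = G C x" "G D (Suc y) = G D x" using G_between[OF yx] btw by auto
  have m1: "G C x = Suc (G C (Suc x))" using G_mem[OF fC x(1)] .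
  have m2: "G D x = G D (Suc x)" using G_nmem[OF x(2)] .
  have mo: "G A x \<le> G A y" "G B x \<le> G B y"
    using G_mono[OF fA, of y x] G_mono[OF fB, of y x] yx by auto
  show ?thesis using q1 q4 s1 s2 b1 m1 m2 mo spZ'[of x] spZ'[of "Suc x"] spZ[of x] spZ[of y] yx
    by simp
qed

lemma winQ_D:
  assumes fA: "finite A" and fB: "finite B" and fC: "finite C" and fD: "finite D"
    and x: "x \<in> D" "x \<notin> C" and y: "y \<in> C" "y \<notin> D" and yx: "y < x"
    and btw: "\<forall>s\<in>C \<union> D. \<not> (y < s \<and> s < x)"
    and spZ': "\<And>t. G D t \<le> G C t \<and> G C t \<le> Suc (G D t)"
    and spZ: "\<And>t. G B t \<le> G A t \<and> G A t \<le> Suc (G B t)"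
    and h1: "\<forall>i\<in>{1..card (insert y (D - {x}))}. ent A i \<ge> ent (insert y (D - {x})) i \<and> ent (insert y (D - {x})) i > ent A (i+1)"
    and h2: "\<forall>i\<in>{1..card (insert x (C - {y}))}. ent B (i - 1) \<ge> ent (insert x (C - {y})) i \<and> ent (insert x (C - {y})) i > ent B i"
    and cA: "card A \<le> card (insert y (D - {x})) + 1"
  shows "G A y = G A x \<and> G B y = G B x"
proof -
  let ?C = "insert x (C - {y})" and ?D = "insert y (D - {x})"
  have fC': "finite ?C" and fD': "finite ?D" using fC fD by auto
  have q2: "G A y \<le> G ?D (Suc y) + 1" using Q2[OF fA fD'] h1 cA by blast
  have q3: "G ?C x \<le> G B x + 1" using Q3[OF fB fC'] h2 by blast
  have s1: "G ?D (Suc y) + (if Suc y \<le> x then 1 else 0) = G D (Suc y) + (if Suc y \<le> y then 1 else 0)"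
    by (rule G_swap[OF fD x(1) y(2)])
  have s2: "G ?C x + (if x \<le> y then 1 else 0) = G C x + (if x \<le> x then 1 else 0)"
    by (rule G_swap[OF fC y(1) x(2)])
  have b1: "G C (Suc y) = G C x" "G D (Suc y) = G D x" using G_between[OF yx] btw by auto
  have m1: "G D x = Suc (G D (Suc x))" using G_mem[OF fD x(1)] .
  have m2: "G C x = G C (Suc x)" using G_nmem[OF x(2)] .
  have mo: "G A x \<le> G A y" "G B x \<le> G B y"
    using G_mono[OF fA, of y x] G_mono[OF fB, of y x] yx by auto
  show ?thesis using q2 q3 s1 s2 b1 m1 m2 mo spZ'[of x] spZ'[of "Suc x"] spZ[of x] spZ[of y] yx
    by simp
qed




lemma dist_dec: "sorted_wrt (>) (xs::nat list) \<Longrightarrow> distinct xs"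
  by (metis sorted_wrt_rev strict_sorted_iff distinct_rev)

lemma pair_props:
  fixes c d :: "nat list"
  assumes lc: "length c = m'" and ld: "length d = m'"
    and sc: "sorted_wrt (>) c" and sd: "sorted_wrt (>) d"
    and Z'special: "\<forall>i < m'. c ! i \<ge> d ! i \<and> (i + 1 < m' \<longrightarrow> d ! i \<ge> c ! (i + 1))"
    and Psi: "consec_pair0 c d Psi"
  shows "\<exists>x y. y < x \<and> Psi = {x,y} \<and>
    ((x \<in> set c \<and> x \<notin> set d \<and> y \<in> set d \<and> y \<notin> set c) \<or>
     (x \<in> set d \<and> x \<notin> set c \<and> y \<in> set c \<and> y \<notin> set d)) \<and>
    (\<forall>s\<in>set c \<union> set d. \<not> (y < s \<and> s < x))"
proof -
  obtain k l where k: "k < length c" and l: "l < length d" and kl: "l + 1 = k \<or> l = k"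
    and P: "Psi = {c ! k, d ! l}" and PI: "Psi \<subseteq> symI (mk_symbol c d)"
    using Psi unfolding consec_pair0_def by blast
  have ck: "c!k \<in> set c" "c!k \<notin> set d" and dl: "d!l \<in> set d" "d!l \<notin> set c"
    using PI P k l by (auto simp: symI_def mk_symbol_def)
  from kl show ?thesis
  proof
    assume kl: "l + 1 = k"
    have le: "c!k \<le> d!l" using Z'special kl k lc l ld by auto
    have ne: "c!k \<noteq> d!l" using ck dl by auto
    have btw: "\<forall>s\<in>set c \<union> set d. \<not> (c!k < s \<and> s < d!l)"
    proof
      fix s assume "s \<in> set c \<union> set d"
      then consider j where "j < m'" "s = c!j" | j where "j < m'" "s = d!j"
        using lc ld by (auto simp: in_set_conv_nth)
      then show "\<not> (c!k < s \<and> s < d!l)"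
      proof cases
        case 1
        show ?thesis
        proof (cases "j \<le> l")
          case True
          have "c!l \<le> c!j" using dec_nth_le[OF sc True] l ld lc by simp
          moreover have "d!l \<le> c!l" using Z'special l ld by auto
          ultimately show ?thesis using 1 by simp
        next
          case False
          then have "c!j \<le> c!k" using dec_nth_le[OF sc, of k j] 1 kl lc by simp
          then show ?thesis using 1 by simp
        qed
      next
        case 2
        show ?thesis
        proof (cases "j \<le> l")
          case True
          have "d!l \<le> d!j" using dec_nth_le[OF sd True] l by simp
          then show ?thesis using 2 by simp
        next
          case False
          have "d!j \<le> d!(l+1)" using dec_nth_le[OF sd, of "l+1" j] 2 False ld by simp
          moreover have "d!(l+1) \<le> c!(l+1)" using Z'special kl k lc by auto
          ultimately show ?thesis using 2 kl by simp
        qed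
      qed
    qed
    show ?thesis
      apply (rule exI[of _ "d!l"], rule exI[of _ "c!k"])
      using le ne P ck dl btw by auto
  next
    assume kl: "l = k"
    have le: "d!k \<le> c!k" using Z'special k lc by auto
    have ne: "c!k \<noteq> d!k" using ck dl kl by auto
    have btw: "\<forall>s\<in>set c \<union> set d. \<not> (d!k < s \<and> s < c!k)"
    proof
      fix s assume "s \<in> set c \<union> set d"
      then consider j where "j < m'" "s = c!j" | j where "j < m'" "s = d!j"
        using lc ld by (auto simp: in_set_conv_nth)
      then show "\<not> (d!k < s \<and> s < c!k)"
      proof cases
        case 1
        show ?thesis
        proof (cases "j \<le> k")
          case True
          have "c!k \<le> c!j" using dec_nth_le[OF sc True] k by simp
          then show ?thesis using 1 by simp
        next
          case False
          have "c!j \<le> c!(k+1)" using dec_nth_le[OF sc, of "k+1" j] 1 False lc by simp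
          moreover have "c!(k+1) \<le> d!k" using Z'special k lc 1 False by auto
          ultimately show ?thesis using 1 by simp
        qed
      next
        case 2
        show ?thesis
        proof (cases "j < k")
          case True
          have "c!k \<le> c!(j+1)" using dec_nth_le[OF sc, of "j+1" k] True k by simp
          moreover have "c!(j+1) \<le> d!j" using Z'special True k lc by auto
          ultimately show ?thesis using 2 by simp
        next
          case False
          have "d!j \<le> d!k" using dec_nth_le[OF sd, of k j] 2 False ld by simp
          then show ?thesis using 2 by simp
        qed
      qed
    qed
    show ?thesis
      apply (rule exI[of _ "c!k"], rule exI[of _ "d!k"])
      using le ne P ck dl btw kl by auto
  qed
qed




theorem lemma0809:
  fixes a b c d :: "nat list" and m m' :: nat and Psi N :: "nat set"
  assumes la: "length a = m + 1" and lb: "length b = m"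
    and sa: "sorted_wrt (>) a" and sb: "sorted_wrt (>) b"
    and Zspecial: "\<forall>i < m. a ! i \<ge> b ! i \<and> b ! i \<ge> a ! (i + 1)"
    and lc: "length c = m'" and ld: "length d = m'"
    and sc: "sorted_wrt (>) c" and sd: "sorted_wrt (>) d"
    and Z'special: "\<forall>i < m'. c ! i \<ge> d ! i \<and> (i + 1 < m' \<longrightarrow> d ! i \<ge> c ! (i + 1))"
    and mm': "m' = m \<or> m' = m + 1"
    and Dne: "Dset m m' (mk_symbol a b) (mk_symbol c d) \<noteq> {}"
    and Psi: "consec_pair0 c d Psi"
    and ZPsi: "(mk_symbol a b, move (mk_symbol c d) Psi) \<in> Dset m m' (mk_symbol a b) (mk_symbol c d)"
    and N: "N \<subseteq> symI (mk_symbol c d)"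
    and NPsi: "card (N \<inter> Psi) = 1"
  shows "\<not> (\<exists>L \<in> Sbar (mk_symbol a b).
            (L, move (mk_symbol c d) N) \<in> Bbar_plus m m' (mk_symbol a b) (mk_symbol c d))"
proof
  assume "\<exists>L \<in> Sbar (mk_symbol a b).
            (L, move (mk_symbol c d) N) \<in> Bbar_plus m m' (mk_symbol a b) (mk_symbol c d)"
  then obtain L where LS: "L \<in> Sbar (mk_symbol a b)"
    and rel: "Bplus_rel m m' L (move (mk_symbol c d) N)"
    unfolding Bbar_plus_def by auto
  define A B C D where "A = set a" "B = set b" "C = set c" "D = set d"
  have fin: "finite A" "finite B" "finite C" "finite D" unfolding A_B_C_D_def by auto
  have cards: "card A = m + 1" "card B = m" "card C = m'" "card D = m'"
    unfolding A_B_C_D_def using la lb lc ld dist_dec[OF sa] dist_dec[OF sb] dist_dec[OF sc] dist_dec[OF sd]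
    by (auto simp: distinct_card)
  have spZ': "\<And>t. G D t \<le> G C t \<and> G C t \<le> Suc (G D t)"
    unfolding A_B_C_D_def
    using special_G[OF dist_dec[OF sc] dist_dec[OF sd]] lc ld Z'special by simp
  have spZ: "\<And>t. G B t \<le> G A t \<and> G A t \<le> Suc (G B t)"
    unfolding A_B_C_D_def
    using special_G[OF dist_dec[OF sa] dist_dec[OF sb]] la lb Zspecial by simp
  obtain x y where yx: "y < x" and P: "Psi = {x,y}"
    and xy: "(x \<in> C \<and> x \<notin> D \<and> y \<in> D \<and> y \<notin> C) \<or> (x \<in> D \<and> x \<notin> C \<and> y \<in> C \<and> y \<notin> D)"
    and btw: "\<forall>s\<in>C \<union> D. \<not> (y < s \<and> s < x)"
    using pair_props[OF lc ld sc sd Z'special Psi] unfolding A_B_C_D_def by blast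
  have relPsi: "Bplus_rel m m' (A, B) (move (C, D) Psi)"
    using ZPsi unfolding Dset_def Bbar_plus_def A_B_C_D_def mk_symbol_def by auto
  have mvC: "move (C, D) Psi = (insert y (C - {x}), insert x (D - {y}))"
    if "x \<in> C \<and> x \<notin> D \<and> y \<in> D \<and> y \<notin> C"
    using that yx P unfolding move_def by auto
  have mvD: "move (C, D) Psi = (insert x (C - {y}), insert y (D - {x}))"
    if "x \<in> D \<and> x \<notin> C \<and> y \<in> C \<and> y \<notin> D"
    using that yx P unfolding move_def by auto
  have cardsw: "card (insert u (S - {v})) = card S" if "finite S" "v \<in> S" "u \<notin> S" for u v S
    using that card_gt_0_iff[of S] by (auto simp: card_insert_if)
  have winP: "G A (Suc y) = G A (Suc x) \<and> G B (Suc y) = G B (Suc x)" if mm: "m' = m"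
  proof -
    from xy show ?thesis
    proof
      assume h: "x \<in> C \<and> x \<notin> D \<and> y \<in> D \<and> y \<notin> C"
      have r: "Bplus_rel m m' (A, B) (insert y (C - {x}), insert x (D - {y}))"
        using relPsi mvC[OF h] by simp
      show ?thesis
        apply (rule winP_C[OF fin])
        using h yx btw spZ' spZ r mm cards cardsw[OF fin(3), of x y] unfolding Bplus_rel_def by auto
    next
      assume h: "x \<in> D \<and> x \<notin> C \<and> y \<in> C \<and> y \<notin> D"
      have r: "Bplus_rel m m' (A, B) (insert x (C - {y}), insert y (D - {x}))"
        using relPsi mvD[OF h] by simp
      show ?thesis
        apply (rule winP_D[OF fin])
        using h yx btw spZ' spZ r mm cards cardsw[OF fin(4), of x y] unfolding Bplus_rel_def by auto
    qed
  qed
  have winQ: "G A y = G A x \<and> G B y = G B x" if mm: "m' = m + 1"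
  proof -
    from xy show ?thesis
    proof
      assume h: "x \<in> C \<and> x \<notin> D \<and> y \<in> D \<and> y \<notin> C"
      have r: "Bplus_rel m m' (A, B) (insert y (C - {x}), insert x (D - {y}))"
        using relPsi mvC[OF h] by simp
      show ?thesis
        apply (rule winQ_C[OF fin])
        using h yx btw spZ' spZ r mm cards cardsw[OF fin(3), of x y] unfolding Bplus_rel_def by auto
    next
      assume h: "x \<in> D \<and> x \<notin> C \<and> y \<in> C \<and> y \<notin> D"
      have r: "Bplus_rel m m' (A, B) (insert x (C - {y}), insert y (D - {x}))"
        using relPsi mvD[OF h] by simp
      show ?thesis
        apply (rule winQ_D[OF fin])
        using h yx btw spZ' spZ r mm cards cardsw[OF fin(4), of x y] unfolding Bplus_rel_def by auto
    qed
  qed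
  obtain M where LM: "L = move (A, B) M" using LS unfolding Sbar_def A_B_C_D_def mk_symbol_def by auto
  have Lsub: "fst L \<subseteq> A \<union> B" "snd L \<subseteq> A \<union> B" using LM unfolding move_def by auto
  have finL: "finite (fst L)" "finite (snd L)" using Lsub fin by (auto intro: finite_subset)
  define CN DN where "CN = fst (move (C, D) N)" "DN = snd (move (C, D) N)"
  have mvN: "move (mk_symbol c d) N = (CN, DN)" unfolding CN_DN_def A_B_C_D_def mk_symbol_def by simp
  have finN: "finite CN" "finite DN" unfolding CN_DN_def move_def using fin by auto
  have xyN: "(x \<in> N \<and> y \<notin> N) \<or> (y \<in> N \<and> x \<notin> N)"
  proof -
    have "N \<inter> Psi \<noteq> {}" using NPsi by auto
    moreover have "\<not> (x \<in> N \<and> y \<in> N)"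
    proof
      assume "x \<in> N \<and> y \<in> N"
      then have "N \<inter> Psi = {x, y}" using P by auto
      then show False using NPsi yx by simp
    qed
    ultimately show ?thesis using P by auto
  qed
  have same: "(x \<in> CN \<and> y \<in> CN) \<or> (x \<in> DN \<and> y \<in> DN)"
    unfolding CN_DN_def move_def using xyN xy by auto
  have relN: "Bplus_rel m m' (fst L, snd L) (CN, DN)" using rel mvN by simp
  have "\<exists>z\<in>A \<union> B. (if m' = m then Suc y \<le> z \<and> z < Suc x else y \<le> z \<and> z < x)"
  proof (cases "m' = m")
    case True
    from same show ?thesis
    proof
      assume h: "x \<in> CN \<and> y \<in> CN"
      have "\<exists>z\<in>snd L. Suc y \<le> z \<and> z < Suc x"
        by (rule gapPC[OF finL(2) finN(1)]) (use relN True h yx in \<open>auto simp: Bplus_rel_def\<close>)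
      then show ?thesis using Lsub True by auto
    next
      assume h: "x \<in> DN \<and> y \<in> DN"
      have "\<exists>z\<in>fst L. Suc y \<le> z \<and> z < Suc x"
        by (rule gapPD[OF finL(1) finN(2)]) (use relN True h yx in \<open>auto simp: Bplus_rel_def\<close>)
      then show ?thesis using Lsub True by auto
    qed
  next
    case False
    then have mm: "m' = m + 1" using mm' by simp
    from same show ?thesis
    proof
      assume h: "x \<in> CN \<and> y \<in> CN"
      have "\<exists>z\<in>snd L. y \<le> z \<and> z < x"
        by (rule gapQC[OF finL(2) finN(1)]) (use relN mm h yx in \<open>auto simp: Bplus_rel_def\<close>)
      then show ?thesis using Lsub False by auto
    next
      assume h: "x \<in> DN \<and> y \<in> DN"
      have "\<exists>z\<in>fst L. y \<le> z \<and> z < x"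
        by (rule gapQD[OF finL(1) finN(2)]) (use relN mm h yx in \<open>auto simp: Bplus_rel_def\<close>)
      then show ?thesis using Lsub False by auto
    qed
  qed
  then obtain z where z: "z \<in> A \<union> B" and zz: "if m' = m then Suc y \<le> z \<and> z < Suc x else y \<le> z \<and> z < x"
    by blast
  show False
  proof (cases "m' = m")
    case True
    then show False using winP[OF True] z zz G_eq_none[OF fin(1)] G_eq_none[OF fin(2)] yx by auto
  next
    case False
    then have mm: "m' = m + 1" using mm' by simp
    show False using winQ[OF mm] z zz False G_eq_none[OF fin(1)] G_eq_none[OF fin(2)] yx
      by (metis Un_iff less_imp_le)
  qed
qed


end
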